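(* Let $G$ be a finite group with identity $e$, and let $\mathcal{B}$ be the set of bases of a rank-$3$ matroid on ground set $G$ invariant under left multiplication by $G$. Let $g\in G$ with $e,g,g^2$ pairwise distinct, and let $k\ge 2$ be an integer with $g^k\notin\{e,g\}$. If $f_{g,g^k}\subseteq\mathcal{B}$, then $f_{g,g^2}\subseteq\mathcal{B}$.
   Context: $G$ acts on $\binom{G}{3}$ by $x\cdot\{a,b,c\}=\{xa,xb,xc\}$. For $g,h\in G$ with $e,g,h$ pairwise distinct, $f_{g,h}=\{\{a,ag,ah\}\mid a\in G\}$ (a $G$-orbit, with $f_{g,h}=f_{h,g}$). A matroid on ground set $G$ is invariant if its set of bases is preserved by this action. *)

theory Defs
  imports "HOL-Algebra.Group"
begin

definition matroid_bases :: "'a set \<Rightarrow> 'a set set \<Rightarrow> bool" where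
  "matroid_bases E \<B> \<longleftrightarrow>
     finite E \<and> \<B> \<subseteq> Pow E \<and> \<B> \<noteq> {} \<and>
     (\<forall>B1\<in>\<B>. \<forall>B2\<in>\<B>. \<forall>x\<in>B1 - B2. \<exists>y\<in>B2 - B1. insert y (B1 - {x}) \<in> \<B>)"

definition matroid_rank_bases :: "'a set \<Rightarrow> 'a set set \<Rightarrow> nat \<Rightarrow> bool" where
  "matroid_rank_bases E \<B> r \<longleftrightarrow> matroid_bases E \<B> \<and> (\<forall>B\<in>\<B>. card B = r)"

definition left_invariant :: "('a, 'b) monoid_scheme \<Rightarrow> 'a set set \<Rightarrow> bool" where
  "left_invariant G \<B> \<longleftrightarrow>
     (\<forall>x\<in>carrier G. (\<lambda>S. (\<lambda>a. x \<otimes>\<^bsub>G\<^esub> a) ` S) ` \<B> = \<B>)"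

definition orbit_f :: "('a, 'b) monoid_scheme \<Rightarrow> 'a \<Rightarrow> 'a \<Rightarrow> 'a set set" where
  "orbit_f G g h = {{a, a \<otimes>\<^bsub>G\<^esub> g, a \<otimes>\<^bsub>G\<^esub> h} | a. a \<in> carrier G}"

end

theory Submission
  imports Defs
begin

lemma augment3:
  assumes M: "matroid_rank_bases E \<B> 3" and B2: "B2 \<in> \<B>" and bc: "b \<in> B2" "c \<in> B2" "b \<noteq> c"
    and B: "B \<in> \<B>"
  shows "\<exists>z\<in>B. z \<notin> {b,c} \<and> insert z {b,c} \<in> \<B>"
proof -
  have c3: "card B2 = 3" using M B2 unfolding matroid_rank_bases_def by auto
  have fin: "finite B2" using c3 by (metis card.infinite zero_neq_numeral)
  have "card (B2 - {b,c}) = 1" using c3 bc fin by (simp add: card_Diff_subset)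
  then obtain y where y: "B2 - {b,c} = {y}" by (auto simp: card_Suc_eq)
  hence B2eq: "B2 = {y,b,c}" and yn: "y \<notin> {b,c}" using bc by auto
  show ?thesis
  proof (cases "y \<in> B")
    case True thus ?thesis using yn B2 B2eq by auto
  next
    case False
    have ex: "\<forall>B1\<in>\<B>. \<forall>B2\<in>\<B>. \<forall>x\<in>B1 - B2. \<exists>y\<in>B2 - B1. insert y (B1 - {x}) \<in> \<B>"
      using M unfolding matroid_rank_bases_def matroid_bases_def by auto
    from ex B2 B False B2eq obtain w where w: "w \<in> B - B2" "insert w (B2 - {y}) \<in> \<B>"
      by (metis DiffI insertCI)
    have "B2 - {y} = {b,c}" using B2eq yn by auto
    thus ?thesis using w B2eq by auto
  qed
qed

lemma line_trans:
  assumes M: "matroid_rank_bases E \<B> 3" and B2: "B2 \<in> \<B>" and bc: "b \<in> B2" "c \<in> B2" "b \<noteq> c"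
    and n1: "{a,b,c} \<notin> \<B>" and n2: "{b,c,x} \<notin> \<B>"
  shows "{a,b,x} \<notin> \<B>"
proof
  assume h: "{a,b,x} \<in> \<B>"
  from augment3[OF M B2 bc h] obtain z where z: "z \<in> {a,b,x}" "z \<notin> {b,c}" "insert z {b,c} \<in> \<B>" by blast
  then have "z = a \<or> z = x" by auto
  thus False using z n1 n2 by (auto simp: insert_commute)
qed

context group begin

lemma inv_fwd:
  assumes "left_invariant G \<B>" "x \<in> carrier G" "S \<in> \<B>"
  shows "(\<lambda>a. x \<otimes> a) ` S \<in> \<B>"
  using assms unfolding left_invariant_def by blast

lemma inv_bwd:
  assumes "left_invariant G \<B>" "x \<in> carrier G" "S \<subseteq> carrier G" "(\<lambda>a. x \<otimes> a) ` S \<in> \<B>"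
  shows "S \<in> \<B>"
proof -
  have "(\<lambda>a. inv x \<otimes> a) ` ((\<lambda>a. x \<otimes> a) ` S) \<in> \<B>"
    using inv_fwd[OF assms(1) _ assms(4)] assms(2) by simp
  moreover have "(\<lambda>a. inv x \<otimes> a) ` ((\<lambda>a. x \<otimes> a) ` S) = S"
    unfolding image_image using assms(2,3)
    by (auto simp: m_assoc[symmetric] intro!: image_eqI)
  ultimately show ?thesis by simp
qed

end

theorem mainTheorem10:
  fixes G :: "('a, 'b) monoid_scheme" and \<B> :: "'a set set" and g :: 'a and k :: nat
  assumes "group G" and "finite (carrier G)"
    and "matroid_rank_bases (carrier G) \<B> 3"
    and "left_invariant G \<B>"
    and "g \<in> carrier G"
    and "\<one>\<^bsub>G\<^esub> \<noteq> g" and "\<one>\<^bsub>G\<^esub> \<noteq> g [^]\<^bsub>G\<^esub> (2::nat)" and "g \<noteq> g [^]\<^bsub>G\<^esub> (2::nat)"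
    and "k \<ge> 2"
    and "g [^]\<^bsub>G\<^esub> k \<notin> {\<one>\<^bsub>G\<^esub>, g}"
    and "orbit_f G g (g [^]\<^bsub>G\<^esub> k) \<subseteq> \<B>"
  shows "orbit_f G g (g [^]\<^bsub>G\<^esub> (2::nat)) \<subseteq> \<B>"
proof -
  interpret group G by fact
  note M = assms(3) and LI = assms(4) and gc = assms(5)
  have card3: "\<And>S. S \<in> \<B> \<Longrightarrow> card S = 3" using M unfolding matroid_rank_bases_def by blast
  have sq: "g \<otimes>\<^bsub>G\<^esub> g = g [^]\<^bsub>G\<^esub> (2::nat)"
  proof -
    have "g [^]\<^bsub>G\<^esub> (2::nat) = g [^]\<^bsub>G\<^esub> (Suc (Suc 0))" by (simp only: numeral_2_eq_2)
    also have "\<dots> = g \<otimes>\<^bsub>G\<^esub> g" using gc by (simp only: nat_pow_Suc nat_pow_0 l_one)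
    finally show ?thesis by simp
  qed
  have Bk0: "{\<one>\<^bsub>G\<^esub>, \<one>\<^bsub>G\<^esub> \<otimes>\<^bsub>G\<^esub> g, \<one>\<^bsub>G\<^esub> \<otimes>\<^bsub>G\<^esub> g [^]\<^bsub>G\<^esub> k} \<in> orbit_f G g (g [^]\<^bsub>G\<^esub> k)"
    unfolding orbit_f_def by blast
  have Bk: "{\<one>\<^bsub>G\<^esub>, g, g [^]\<^bsub>G\<^esub> k} \<in> \<B>" using Bk0 assms(11) gc by (simp add: l_one subset_iff)
  have B2: "{g, g [^]\<^bsub>G\<^esub> (2::nat), g \<otimes>\<^bsub>G\<^esub> g [^]\<^bsub>G\<^esub> k} \<in> \<B>"
    using inv_fwd[OF LI gc Bk] gc sq by simp
  have base: "{\<one>\<^bsub>G\<^esub>, g, g [^]\<^bsub>G\<^esub> (2::nat)} \<in> \<B>"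
  proof (rule ccontr)
    assume nb: "{\<one>\<^bsub>G\<^esub>, g, g [^]\<^bsub>G\<^esub> (2::nat)} \<notin> \<B>"
    have "{\<one>\<^bsub>G\<^esub>, g, g [^]\<^bsub>G\<^esub> n} \<notin> \<B>" for n :: nat
    proof (induction n)
      case 0
      have "card {\<one>\<^bsub>G\<^esub>, g, g [^]\<^bsub>G\<^esub> (0::nat)} \<noteq> 3" by (simp add: card_insert_if)
      then show ?case using card3 by blast
    next
      case (Suc n)
      have sub: "{\<one>\<^bsub>G\<^esub>, g, g [^]\<^bsub>G\<^esub> n} \<subseteq> carrier G" using gc by simp
      have "(\<lambda>a. g \<otimes>\<^bsub>G\<^esub> a) ` {\<one>\<^bsub>G\<^esub>, g, g [^]\<^bsub>G\<^esub> n} \<notin> \<B>"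
        using inv_bwd[OF LI gc sub] Suc.IH by blast
      moreover have "(\<lambda>a. g \<otimes>\<^bsub>G\<^esub> a) ` {\<one>\<^bsub>G\<^esub>, g, g [^]\<^bsub>G\<^esub> n} = {g, g [^]\<^bsub>G\<^esub> (2::nat), g [^]\<^bsub>G\<^esub> Suc n}"
        using gc sq by (simp only: image_insert image_empty r_one nat_pow_Suc2)
      ultimately have h: "{g, g [^]\<^bsub>G\<^esub> (2::nat), g [^]\<^bsub>G\<^esub> Suc n} \<notin> \<B>" by simp
      show ?case using line_trans[OF M B2 _ _ assms(8) nb h] by simp
    qed
    thus False using Bk by blast
  qed
  show ?thesis
  proof
    fix S assume "S \<in> orbit_f G g (g [^]\<^bsub>G\<^esub> (2::nat))"
    then obtain a where a: "a \<in> carrier G" "S = {a, a \<otimes>\<^bsub>G\<^esub> g, a \<otimes>\<^bsub>G\<^esub> g [^]\<^bsub>G\<^esub> (2::nat)}"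
      unfolding orbit_f_def by blast
    have "(\<lambda>x. a \<otimes>\<^bsub>G\<^esub> x) ` {\<one>\<^bsub>G\<^esub>, g, g [^]\<^bsub>G\<^esub> (2::nat)} \<in> \<B>" by (rule inv_fwd[OF LI a(1) base])
    moreover have "(\<lambda>x. a \<otimes>\<^bsub>G\<^esub> x) ` {\<one>\<^bsub>G\<^esub>, g, g [^]\<^bsub>G\<^esub> (2::nat)} = S"
      using a by (simp only: image_insert image_empty r_one)
    ultimately show "S \<in> \<B>" by simp
  qed
qed

end
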